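(* Let $R$ be a unital commutative Hausdorff topological ring with dense group of units, $E,F\in\mathrm{TopSMod}_R$, $\mathcal U\subset\underline E$ an open subfunctor and $f:\mathcal U\Rightarrow\underline F$ a natural transformation of functors $\Lambda\to\mathrm{Top}$ such that each $f_\lambda$, $\lambda\in\Lambda$, is $\mathcal C^1$ over $R$. Then for every $\lambda\in\Lambda$, every $x\in\mathcal U(\lambda)$, every $p$ with $\theta_p\in\lambda$ and every $y\in\underline E(\lambda\theta_p)$, $$f_\lambda(x+y)=f_\lambda(x)+df_\lambda(x)y.$$ If $R$, $E$ and $F$ are locally $k_\omega$, it suffices to assume that $f_\infty$ is $\mathcal C^1$ over $R$, and the conclusion then holds for all $\lambda\in\Lambda^\infty$ (with $f_{\lambda^\infty}=f_\infty$).
   Context: $\lambda^n=R[\theta_1,\dots,\theta_n]$, $\lambda^\infty=R[\theta_i:i\in\mathbb N]$ Grassmann algebras on odd generators ($\lambda^n=\bigoplus_I R\theta_I$ product topology; $\lambda^\infty$ direct limit topology). $\Lambda$ (resp. $\Lambda^\infty$): category of the $\lambda^n$, $n<\infty$ (resp. also $\lambda^\infty$), morphisms even unital $R$-algebra morphisms; $\varepsilon:\lambda\to R$ kills all $\theta_i$. For a Hausdorff graded topological $R$-module $E=E_0\oplus E_1$ ($E\in\mathrm{TopSMod}_R$): $E\otimes\lambda^N=\prod_{|I|\le N}E\theta_I$ (product topology), $E\otimes\lambda^\infty=\varinjlim E\otimes\lambda^N$ in Top, $\underline E(\lambda)=(E\otimes\lambda)_0$ with functoriality $\mathrm{id}\otimes\varphi$,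 and $\underline E(\lambda\theta_p)=(E\otimes\lambda\theta_p)_0\subset\underline E(\lambda)$. $\underline E(\lambda)$ is a topological $R$-module for $\lambda\in\Lambda$, and also for $\lambda^\infty$ when $R,E$ are locally $k_\omega$ (Hausdorff with every point having an open neighbourhood that is the topological direct limit of an increasing sequence of compact subsets). An open subfunctor $\mathcal U\subset\underline E$ has all $\mathcal U(\lambda)$ open and satisfies $\mathcal U(\lambda)=\underline E(\varepsilon)^{-1}(\mathcal U(R))$; this formula defines $\mathcal U(\lambda^\infty)$, and $f_\infty:\mathcal U(\lambda^\infty)\to\underline F(\lambda^\infty)$ is defined by $f_\infty|_{\mathcal U(\lambda^n)}=f_{\lambda^n}$. $\mathcal C^1$ over $R$ (Bertram–Glöckner–Neeb): a continuous $g:V\to Y$ ($V$ open in a Hausdorff topological $R$-module) is $\mathcal C^1$ if there is a continuous $g^{[1]}$ on $\{(x,v,t):x,x+tv\in V,t\in R\}$ with $g(x+tv)-g(x)=t\,g^{[1]}(x,v,t)$; then $dg(x)v=g^{[1]}(x,v,0)$. *)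

theory Defs
  imports "HOL-Analysis.Analysis" "HOL-Library.Extended_Nat"
begin

text \<open>Odd generators are indexed by natural numbers starting at 0;
  the Grassmann algebra lambda^n (n :: enat, n = \<infinity> for lambda^\<infinity>) is generated by the
  theta_i with i < n. A monomial theta_I (I a finite set of indices, multiplied in
  increasing order) is represented by I; an element of lambda^n (resp. of E tensor lambda^n)
  is a finitely supported function from index sets to R (resp. to E).\<close>

definition idx_ok :: "enat \<Rightarrow> nat set \<Rightarrow> bool" where
  "idx_ok n I \<longleftrightarrow> finite I \<and> (\<forall>i\<in>I. enat i < n)"

definition Lam :: "enat \<Rightarrow> (nat set \<Rightarrow> 'r::comm_ring_1) set" where
  "Lam n = {a. finite {I. a I \<noteq> 0} \<and> (\<forall>I. a I \<noteq> 0 \<longrightarrow> idx_ok n I)}"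

definition gbasis :: "nat set \<Rightarrow> nat set \<Rightarrow> 'r::comm_ring_1" where
  "gbasis I = (\<lambda>K. if K = I then 1 else 0)"

definition gone :: "nat set \<Rightarrow> 'r::comm_ring_1" where
  "gone = gbasis {}"

definition gadd :: "(nat set \<Rightarrow> 'r::comm_ring_1) \<Rightarrow> (nat set \<Rightarrow> 'r) \<Rightarrow> nat set \<Rightarrow> 'r" where
  "gadd a b = (\<lambda>I. a I + b I)"

definition gscale :: "'r::comm_ring_1 \<Rightarrow> (nat set \<Rightarrow> 'r) \<Rightarrow> nat set \<Rightarrow> 'r" where
  "gscale r a = (\<lambda>I. r * a I)"

text \<open>Sign of theta_I theta_J = gsign I J * theta_(I union J) for disjoint I, J.\<close>
definition gsign :: "nat set \<Rightarrow> nat set \<Rightarrow> 'r::comm_ring_1" where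
  "gsign I J = (-1) ^ card {(i, j). i \<in> I \<and> j \<in> J \<and> j < i}"

definition gmul :: "(nat set \<Rightarrow> 'r::comm_ring_1) \<Rightarrow> (nat set \<Rightarrow> 'r) \<Rightarrow> nat set \<Rightarrow> 'r" where
  "gmul a b = (\<lambda>K. \<Sum>I\<in>Pow K. gsign I (K - I) * a I * b (K - I))"

definition geven :: "(nat set \<Rightarrow> 'r::comm_ring_1) \<Rightarrow> bool" where
  "geven a \<longleftrightarrow> (\<forall>I. odd (card I) \<longrightarrow> a I = 0)"

definition godd :: "(nat set \<Rightarrow> 'r::comm_ring_1) \<Rightarrow> bool" where
  "godd a \<longleftrightarrow> (\<forall>I. even (card I) \<longrightarrow> a I = 0)"

text \<open>Morphisms lambda^n \<rightarrow> lambda^m of the category Lambda^\<infinity>: even unital R-algebra morphisms.\<close>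
definition gmorph :: "enat \<Rightarrow> enat \<Rightarrow> ((nat set \<Rightarrow> 'r::comm_ring_1) \<Rightarrow> (nat set \<Rightarrow> 'r)) \<Rightarrow> bool" where
  "gmorph n m \<phi> \<longleftrightarrow>
     (\<forall>a\<in>Lam n. \<phi> a \<in> Lam m) \<and>
     (\<forall>a\<in>Lam n. \<forall>b\<in>Lam n. \<phi> (gadd a b) = gadd (\<phi> a) (\<phi> b)) \<and>
     (\<forall>r. \<forall>a\<in>Lam n. \<phi> (gscale r a) = gscale r (\<phi> a)) \<and>
     \<phi> gone = gone \<and>
     (\<forall>a\<in>Lam n. \<forall>b\<in>Lam n. \<phi> (gmul a b) = gmul (\<phi> a) (\<phi> b)) \<and>
     (\<forall>a\<in>Lam n. geven a \<longrightarrow> geven (\<phi> a)) \<and>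
     (\<forall>a\<in>Lam n. godd a \<longrightarrow> godd (\<phi> a))"

definition geps :: "(nat set \<Rightarrow> 'r::comm_ring_1) \<Rightarrow> nat set \<Rightarrow> 'r" where
  "geps a = (\<lambda>I. if I = {} then a {} else 0)"

definition top_module :: "('r::{comm_ring_1,topological_space} \<Rightarrow> 'e::{topological_ab_group_add} \<Rightarrow> 'e) \<Rightarrow> bool" where
  "top_module s \<longleftrightarrow> module s \<and> continuous_on UNIV (\<lambda>p. s (fst p) (snd p))"

text \<open>Hausdorff graded topological R-module E = E0 \<oplus> E1 (topological direct sum of
  two submodules): the projection onto E0 along E1 is continuous.\<close>
definition graded_top_module ::
  "('r::{comm_ring_1,topological_space} \<Rightarrow> 'e::{topological_ab_group_add,t2_space} \<Rightarrow> 'e) \<Rightarrow> 'e set \<Rightarrow> 'e set \<Rightarrow> bool" where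
  "graded_top_module s E0 E1 \<longleftrightarrow> top_module s \<and>
     module.subspace s E0 \<and> module.subspace s E1 \<and> E0 \<inter> E1 = {0} \<and>
     (\<forall>x. \<exists>a\<in>E0. \<exists>b\<in>E1. x = a + b) \<and>
     continuous_on UNIV (\<lambda>x. THE a. a \<in> E0 \<and> x - a \<in> E1)"

definition TE :: "enat \<Rightarrow> (nat set \<Rightarrow> 'e::zero) set" where
  "TE n = {x. finite {I. x I \<noteq> 0} \<and> (\<forall>I. x I \<noteq> 0 \<longrightarrow> idx_ok n I)}"

definition TEtop_fin :: "nat \<Rightarrow> (nat set \<Rightarrow> 'e::{zero,topological_space}) topology" where
  "TEtop_fin N = pullback_topology (TE (enat N)) (\<lambda>x. restrict x (Pow {..<N}))
      (product_topology (\<lambda>_. euclidean) (Pow {..<N}))"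

text \<open>Product topology for finite n, direct limit topology of the E tensor lambda^N for n = \<infinity>.\<close>
definition TEtop :: "enat \<Rightarrow> (nat set \<Rightarrow> 'e::{zero,topological_space}) topology" where
  "TEtop n = (case n of enat N \<Rightarrow> TEtop_fin N
     | \<infinity> \<Rightarrow> topology (\<lambda>A. A \<subseteq> TE \<infinity> \<and> (\<forall>N. openin (TEtop_fin N) (A \<inter> TE (enat N)))))"

text \<open>underline E(lambda^n) = (E tensor lambda^n)_0\<close>
definition Ebar :: "'e set \<Rightarrow> 'e set \<Rightarrow> enat \<Rightarrow> (nat set \<Rightarrow> 'e::zero) set" where
  "Ebar E0 E1 n = {x \<in> TE n. \<forall>I. x I \<in> (if even (card I) then E0 else E1)}"

definition Etop :: "'e set \<Rightarrow> 'e set \<Rightarrow> enat \<Rightarrow> (nat set \<Rightarrow> 'e::{zero,topological_space}) topology" where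
  "Etop E0 E1 n = subtopology (TEtop n) (Ebar E0 E1 n)"

text \<open>underline E(lambda theta_p) = (E tensor lambda theta_p)_0\<close>
definition Ebar_ideal :: "'e set \<Rightarrow> 'e set \<Rightarrow> enat \<Rightarrow> nat \<Rightarrow> (nat set \<Rightarrow> 'e::zero) set" where
  "Ebar_ideal E0 E1 n p = {x \<in> Ebar E0 E1 n. \<forall>I. p \<notin> I \<longrightarrow> x I = 0}"

text \<open>Functoriality: underline E(phi) = id tensor phi.\<close>
definition Emap :: "('r::comm_ring_1 \<Rightarrow> 'e::ab_group_add \<Rightarrow> 'e) \<Rightarrow> ((nat set \<Rightarrow> 'r) \<Rightarrow> (nat set \<Rightarrow> 'r))
    \<Rightarrow> (nat set \<Rightarrow> 'e) \<Rightarrow> nat set \<Rightarrow> 'e" where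
  "Emap s \<phi> x = (\<lambda>J. \<Sum>I\<in>{I. x I \<noteq> 0}. s (\<phi> (gbasis I) J) (x I))"

definition vadd :: "(nat set \<Rightarrow> 'e::ab_group_add) \<Rightarrow> (nat set \<Rightarrow> 'e) \<Rightarrow> nat set \<Rightarrow> 'e" where
  "vadd x y = (\<lambda>I. x I + y I)"

definition vdiff :: "(nat set \<Rightarrow> 'e::ab_group_add) \<Rightarrow> (nat set \<Rightarrow> 'e) \<Rightarrow> nat set \<Rightarrow> 'e" where
  "vdiff x y = (\<lambda>I. x I - y I)"

definition vscale :: "('r \<Rightarrow> 'e \<Rightarrow> 'e) \<Rightarrow> 'r \<Rightarrow> (nat set \<Rightarrow> 'e) \<Rightarrow> nat set \<Rightarrow> 'e" where
  "vscale s t x = (\<lambda>I. s t (x I))"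

definition C1_dom :: "('r::comm_ring_1 \<Rightarrow> 'e::ab_group_add \<Rightarrow> 'e) \<Rightarrow> (nat set \<Rightarrow> 'e) topology
    \<Rightarrow> (nat set \<Rightarrow> 'e) set \<Rightarrow> ((nat set \<Rightarrow> 'e) \<times> (nat set \<Rightarrow> 'e) \<times> 'r) set" where
  "C1_dom sE X V = {(x, v, t). x \<in> V \<and> v \<in> topspace X \<and> vadd x (vscale sE t v) \<in> V}"

definition C1_wit ::
  "('r::{comm_ring_1,topological_space} \<Rightarrow> 'e::ab_group_add \<Rightarrow> 'e) \<Rightarrow> ('r \<Rightarrow> 'f::ab_group_add \<Rightarrow> 'f)
   \<Rightarrow> (nat set \<Rightarrow> 'e) topology \<Rightarrow> (nat set \<Rightarrow> 'f) topology \<Rightarrow> (nat set \<Rightarrow> 'e) set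
   \<Rightarrow> ((nat set \<Rightarrow> 'e) \<Rightarrow> (nat set \<Rightarrow> 'f))
   \<Rightarrow> ((nat set \<Rightarrow> 'e) \<times> (nat set \<Rightarrow> 'e) \<times> 'r \<Rightarrow> (nat set \<Rightarrow> 'f)) \<Rightarrow> bool" where
  "C1_wit sE sF X Y V g g1 \<longleftrightarrow>
     continuous_map (subtopology (prod_topology X (prod_topology X euclidean)) (C1_dom sE X V)) Y g1 \<and>
     (\<forall>(x, v, t)\<in>C1_dom sE X V. vdiff (g (vadd x (vscale sE t v))) (g x) = vscale sF t (g1 (x, v, t)))"

definition is_C1 ::
  "('r::{comm_ring_1,topological_space} \<Rightarrow> 'e::ab_group_add \<Rightarrow> 'e) \<Rightarrow> ('r \<Rightarrow> 'f::ab_group_add \<Rightarrow> 'f)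
   \<Rightarrow> (nat set \<Rightarrow> 'e) topology \<Rightarrow> (nat set \<Rightarrow> 'f) topology \<Rightarrow> (nat set \<Rightarrow> 'e) set
   \<Rightarrow> ((nat set \<Rightarrow> 'e) \<Rightarrow> (nat set \<Rightarrow> 'f)) \<Rightarrow> bool" where
  "is_C1 sE sF X Y V g \<longleftrightarrow> openin X V \<and> continuous_map (subtopology X V) Y g \<and>
     (\<exists>g1. C1_wit sE sF X Y V g g1)"

text \<open>dg(x)v = g^[1](x,v,0) (g^[1] is unique on its domain when the units are dense).\<close>
definition dC1 ::
  "('r::{comm_ring_1,topological_space} \<Rightarrow> 'e::ab_group_add \<Rightarrow> 'e) \<Rightarrow> ('r \<Rightarrow> 'f::ab_group_add \<Rightarrow> 'f)
   \<Rightarrow> (nat set \<Rightarrow> 'e) topology \<Rightarrow> (nat set \<Rightarrow> 'f) topology \<Rightarrow> (nat set \<Rightarrow> 'e) set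
   \<Rightarrow> ((nat set \<Rightarrow> 'e) \<Rightarrow> (nat set \<Rightarrow> 'f)) \<Rightarrow> (nat set \<Rightarrow> 'e) \<Rightarrow> (nat set \<Rightarrow> 'e) \<Rightarrow> (nat set \<Rightarrow> 'f)" where
  "dC1 sE sF X Y V g x v = (SOME g1. C1_wit sE sF X Y V g g1) (x, v, 0)"

definition locally_kw :: "'a topology \<Rightarrow> bool" where
  "locally_kw X \<longleftrightarrow> Hausdorff_space X \<and>
    (\<forall>x\<in>topspace X. \<exists>U K. openin X U \<and> x \<in> U \<and> (\<forall>n. compactin X (K n)) \<and>
       (\<forall>n. K n \<subseteq> K (Suc n)) \<and> U = (\<Union>n. K n) \<and>
       (\<forall>A. A \<subseteq> U \<longrightarrow> (openin (subtopology X U) A \<longleftrightarrow>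
                              (\<forall>n. openin (subtopology X (K n)) (A \<inter> K n)))))"

end

theory Submission
  imports Defs
begin


lemma gtm_module: "graded_top_module s A B \<Longrightarrow> module s"
  by (simp add: graded_top_module_def top_module_def)
lemma gtm_cont: "graded_top_module s A B \<Longrightarrow> continuous_on UNIV (\<lambda>p. s (fst p) (snd p))"
  by (simp add: graded_top_module_def top_module_def)
lemma gtm_subA: "graded_top_module s A B \<Longrightarrow> module.subspace s A"
  by (simp add: graded_top_module_def)
lemma gtm_subB: "graded_top_module s A B \<Longrightarrow> module.subspace s B"
  by (simp add: graded_top_module_def)

lemma TE_zero: "x \<in> TE (enat N) \<Longrightarrow> \<not> J \<subseteq> {..<N} \<Longrightarrow> x J = 0"
  unfolding TE_def idx_ok_def by auto

lemma topspace_TEtop_fin: "topspace (TEtop_fin N) = TE (enat N)"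
  unfolding TEtop_fin_def topspace_pullback_topology by auto

lemma Ebar_sub_TE: "Ebar A B n \<subseteq> TE n"
  unfolding Ebar_def by auto

lemma Etop_fin: "Etop A B (enat N) = subtopology (TEtop_fin N) (Ebar A B (enat N))"
  unfolding Etop_def TEtop_def by simp

lemma topspace_Etop_fin: "topspace (Etop A B (enat N)) = Ebar A B (enat N)"
  unfolding Etop_fin using Ebar_sub_TE[of A B "enat N"] by (auto simp: topspace_TEtop_fin)

lemma cont_ev_fin: "continuous_map (TEtop_fin N) euclidean (\<lambda>x::nat set \<Rightarrow> 'e::{zero,topological_space}. x J)"
proof (cases "J \<in> Pow {..<N}")
  case True
  have "continuous_map (TEtop_fin N) euclidean ((\<lambda>g. g J) \<circ> (\<lambda>x::nat set \<Rightarrow> 'e. restrict x (Pow {..<N})))"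
    unfolding TEtop_fin_def
    by (rule continuous_map_pullback, rule continuous_map_product_projection[OF True])
  moreover have "((\<lambda>g. g J) \<circ> (\<lambda>x::nat set \<Rightarrow> 'e. restrict x (Pow {..<N}))) = (\<lambda>x. x J)"
    using True by auto
  ultimately show ?thesis by (simp only:)
next
  case False
  show ?thesis
    by (rule continuous_map_eq[of _ _ "\<lambda>x. 0"]) (use False TE_zero in \<open>auto simp: topspace_TEtop_fin\<close>)
qed

lemma cont_into_fin:
  assumes "\<And>x. x \<in> topspace X \<Longrightarrow> h x \<in> TE (enat N)"
    and "\<And>J. continuous_map X euclidean (\<lambda>x. h x J)"
  shows "continuous_map X (TEtop_fin N) h"
  unfolding TEtop_fin_def
proof (rule continuous_map_pullback')
  show "continuous_map X (product_topology (\<lambda>_. euclidean) (Pow {..<N})) ((\<lambda>x. restrict x (Pow {..<N})) \<circ> h)"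
    unfolding continuous_map_componentwise using assms(2) by auto
  show "topspace X \<subseteq> h -` TE (enat N)" using assms(1) by auto
qed

lemma cont_into_Etop:
  assumes "\<And>x. x \<in> topspace X \<Longrightarrow> h x \<in> Ebar A B (enat N)"
    and "\<And>J. continuous_map X euclidean (\<lambda>x. h x J)"
  shows "continuous_map X (Etop A B (enat N)) h"
  unfolding Etop_fin continuous_map_in_subtopology
proof
  show "continuous_map X (TEtop_fin N) h"
    by (rule cont_into_fin) (use assms(1) Ebar_sub_TE in blast, rule assms(2))
  show "h \<in> topspace X \<rightarrow> Ebar A B (enat N)" using assms(1) by blast
qed

lemma cont_ev_Etop: "continuous_map (Etop A B (enat N)) euclidean (\<lambda>x. x J)"
  unfolding Etop_fin by (rule continuous_map_from_subtopology[OF cont_ev_fin])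




definition phi :: "nat \<Rightarrow> 'r::comm_ring_1 \<Rightarrow> (nat set \<Rightarrow> 'r) \<Rightarrow> nat set \<Rightarrow> 'r" where
  "phi p s a = (\<lambda>K. if p \<in> K then s * a K else a K)"

lemma gmul_phi: "gmul (phi p s a) (phi p s b) = phi p s (gmul a b)"
proof
  fix K
  show "gmul (phi p s a) (phi p s b) K = phi p s (gmul a b) K"
  proof (cases "p \<in> K")
    case True
    have "gmul (phi p s a) (phi p s b) K = (\<Sum>I\<in>Pow K. s * (gsign I (K - I) * a I * b (K - I)))"
      unfolding gmul_def phi_def
      by (rule sum.cong) (use True in auto)
    also have "\<dots> = phi p s (gmul a b) K"
      unfolding gmul_def phi_def using True by (simp add: sum_distrib_left)
    finally show ?thesis .
  next
    case False
    then show ?thesis unfolding gmul_def phi_def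
      by (auto intro!: sum.cong)
  qed
qed

lemma gmorph_phi: "gmorph n n (phi p s)"
  unfolding gmorph_def
proof (intro conjI ballI allI impI)
  fix a :: "nat set \<Rightarrow> 'a" assume "a \<in> Lam n"
  then show "phi p s a \<in> Lam n"
    unfolding Lam_def phi_def
    by (auto elim!: rev_finite_subset) (metis mult_zero_right)
next
  fix a b :: "nat set \<Rightarrow> 'a"
  show "phi p s (gadd a b) = gadd (phi p s a) (phi p s b)"
    unfolding phi_def gadd_def by (auto simp: distrib_left)
next
  fix r and a :: "nat set \<Rightarrow> 'a"
  show "phi p s (gscale r a) = gscale r (phi p s a)"
    unfolding phi_def gscale_def by (auto simp: mult.left_commute)
next
  show "phi p s gone = gone"
    unfolding phi_def gone_def gbasis_def by auto
next
  fix a b :: "nat set \<Rightarrow> 'a"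
  show "phi p s (gmul a b) = gmul (phi p s a) (phi p s b)" by (simp add: gmul_phi)
next
  fix a :: "nat set \<Rightarrow> 'a" assume "geven a" then show "geven (phi p s a)"
    unfolding geven_def phi_def by auto
next
  fix a :: "nat set \<Rightarrow> 'a" assume "godd a" then show "godd (phi p s a)"
    unfolding godd_def phi_def by auto
qed

lemma Emap_diag:
  assumes m: "module s" and fin: "finite {I. x I \<noteq> 0}"
    and diag: "\<And>I J. \<phi> (gbasis I) J = (if I = J then k J else 0)"
  shows "Emap s \<phi> x = (\<lambda>J. s (k J) (x J))"
proof
  fix J
  have "Emap s \<phi> x J = (\<Sum>I\<in>{I. x I \<noteq> 0}. if I = J then s (k J) (x I) else 0)"
    unfolding Emap_def diag by (rule sum.cong) (auto simp: module.scale_zero_left[OF m])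
  also have "\<dots> = (if J \<in> {I. x I \<noteq> 0} then s (k J) (x J) else 0)"
    using fin by (simp add: sum.delta')
  also have "\<dots> = s (k J) (x J)"
    by (auto simp: module.scale_zero_right[OF m])
  finally show "Emap s \<phi> x J = s (k J) (x J)" .
qed

lemma Emap_phi:
  assumes m: "module s" and fin: "finite {I. x I \<noteq> 0}"
  shows "Emap s (phi p c) x = (\<lambda>J. if p \<in> J then s c (x J) else x J)"
proof -
  have "Emap s (phi p c) x = (\<lambda>J. s (if p \<in> J then c else 1) (x J))"
    by (rule Emap_diag[OF m fin]) (auto simp: phi_def gbasis_def)
  then show ?thesis by (auto simp: module.scale_one[OF m])
qed

lemma Emap_geps:
  assumes m: "module s" and fin: "finite {I. x I \<noteq> 0}"
  shows "Emap s geps x = (\<lambda>J. if J = {} then x {} else 0)"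
proof -
  have "Emap s geps x = (\<lambda>J. s (if J = {} then 1 else 0) (x J))"
    by (rule Emap_diag[OF m fin]) (auto simp: geps_def gbasis_def)
  then show ?thesis by (auto simp: module.scale_one[OF m] module.scale_zero_left[OF m])
qed

lemma TE_fin: "x \<in> TE n \<Longrightarrow> finite {I. x I \<noteq> 0}"
  unfolding TE_def by auto




definition Pp :: "nat \<Rightarrow> (nat set \<Rightarrow> 'f::zero) \<Rightarrow> nat set \<Rightarrow> 'f" where
  "Pp p F = (\<lambda>J. if p \<in> J then F J else 0)"
definition Qp :: "nat \<Rightarrow> (nat set \<Rightarrow> 'f::zero) \<Rightarrow> nat set \<Rightarrow> 'f" where
  "Qp p F = (\<lambda>J. if p \<in> J then 0 else F J)"

locale core =
  fixes sE :: "'r::{comm_ring_1,topological_ab_group_add,topological_semigroup_mult,t2_space} \<Rightarrow> 'e::{topological_ab_group_add,t2_space} \<Rightarrow> 'e"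
    and sF :: "'r \<Rightarrow> 'f::{topological_ab_group_add,t2_space} \<Rightarrow> 'f"
    and E0 E1 :: "'e set" and F0 F1 :: "'f set"
    and N :: nat and UU :: "(nat set \<Rightarrow> 'e) set" and f :: "(nat set \<Rightarrow> 'e) \<Rightarrow> (nat set \<Rightarrow> 'f)"
    and g1 and p :: nat
  assumes units_dense: "closure {u::'r. \<exists>v. u * v = 1} = UNIV"
    and E_mod: "graded_top_module sE E0 E1"
    and F_mod: "graded_top_module sF F0 F1"
    and UU_sub: "UU \<subseteq> Ebar E0 E1 (enat N)"
    and UU_body: "\<And>x z. x \<in> UU \<Longrightarrow> z \<in> Ebar E0 E1 (enat N) \<Longrightarrow> z {} = x {} \<Longrightarrow> z \<in> UU"
    and f_in: "\<And>x. x \<in> UU \<Longrightarrow> f x \<in> Ebar F0 F1 (enat N)"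
    and f_nat: "\<And>s x. x \<in> UU \<Longrightarrow> Emap sF (phi p s) (f x) = f (Emap sE (phi p s) x)"
    and wit: "C1_wit sE sF (Etop E0 E1 (enat N)) (Etop F0 F1 (enat N)) UU f g1"
begin

abbreviation "I \<equiv> Ebar_ideal E0 E1 (enat N) p"

lemma mE: "module sE" using gtm_module[OF E_mod] .
lemma mF: "module sF" using gtm_module[OF F_mod] .

lemmas sEs = module.scale_zero_left[OF mE] module.scale_zero_right[OF mE] module.scale_one[OF mE]
  module.scale_scale[OF mE] module.scale_right_distrib[OF mE]
lemmas sFs = module.scale_zero_left[OF mF] module.scale_zero_right[OF mF] module.scale_one[OF mF]
  module.scale_scale[OF mF] module.scale_right_distrib[OF mF]

lemma subE: "x \<in> E0 \<Longrightarrow> y \<in> E0 \<Longrightarrow> x + y \<in> E0" "x \<in> E1 \<Longrightarrow> y \<in> E1 \<Longrightarrow> x + y \<in> E1"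
  "x \<in> E0 \<Longrightarrow> sE c x \<in> E0" "x \<in> E1 \<Longrightarrow> sE c x \<in> E1" "0 \<in> E0" "0 \<in> E1"
  using module.subspace_add[OF mE gtm_subA[OF E_mod]] module.subspace_add[OF mE gtm_subB[OF E_mod]]
    module.subspace_scale[OF mE gtm_subA[OF E_mod]] module.subspace_scale[OF mE gtm_subB[OF E_mod]]
    module.subspace_0[OF mE gtm_subA[OF E_mod]] module.subspace_0[OF mE gtm_subB[OF E_mod]]
  by auto

lemma Ebar_pw2:
  assumes x: "x \<in> Ebar A B n" and y: "y \<in> Ebar A B n"
    and z: "\<And>I. x I = 0 \<Longrightarrow> y I = 0 \<Longrightarrow> h I = 0"
    and a: "\<And>I. x I \<in> A \<Longrightarrow> y I \<in> A \<Longrightarrow> h I \<in> A"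
    and b: "\<And>I. x I \<in> B \<Longrightarrow> y I \<in> B \<Longrightarrow> h I \<in> B"
  shows "h \<in> Ebar A B n"
proof -
  have "finite {I. h I \<noteq> 0}"
    by (rule finite_subset[of _ "{I. x I \<noteq> 0} \<union> {I. y I \<noteq> 0}"]) (use x y z in \<open>auto simp: Ebar_def TE_def\<close>)
  moreover have "\<forall>I. h I \<noteq> 0 \<longrightarrow> idx_ok n I"
  proof (intro allI impI)
    fix I assume "h I \<noteq> 0"
    then have "x I \<noteq> 0 \<or> y I \<noteq> 0" using z by blast
    then show "idx_ok n I" using x y unfolding Ebar_def TE_def by blast
  qed
  moreover have "\<forall>I. h I \<in> (if even (card I) then A else B)"
  proof
    fix I
    have xi: "x I \<in> (if even (card I) then A else B)" and yi: "y I \<in> (if even (card I) then A else B)"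
      using x y unfolding Ebar_def by blast+
    show "h I \<in> (if even (card I) then A else B)"
    proof (cases "even (card I)")
      case True then show ?thesis using xi yi a by simp
    next
      case False then show ?thesis using xi yi b by simp
    qed
  qed
  ultimately show ?thesis unfolding Ebar_def TE_def by auto
qed

lemma Ebar_vadd: "x \<in> Ebar E0 E1 (enat N) \<Longrightarrow> y \<in> Ebar E0 E1 (enat N) \<Longrightarrow> vadd x y \<in> Ebar E0 E1 (enat N)"
proof (rule Ebar_pw2[of x _ _ _ y])
  fix I show "x I = 0 \<Longrightarrow> y I = 0 \<Longrightarrow> vadd x y I = 0" by (simp add: vadd_def)
  show "x I \<in> E0 \<Longrightarrow> y I \<in> E0 \<Longrightarrow> vadd x y I \<in> E0" unfolding vadd_def by (rule subE(1))
  show "x I \<in> E1 \<Longrightarrow> y I \<in> E1 \<Longrightarrow> vadd x y I \<in> E1" unfolding vadd_def by (rule subE(2))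
qed

lemma Ebar_vscale: "x \<in> Ebar E0 E1 (enat N) \<Longrightarrow> vscale sE c x \<in> Ebar E0 E1 (enat N)"
proof (rule Ebar_pw2[of x _ _ _ x])
  fix I show "x I = 0 \<Longrightarrow> x I = 0 \<Longrightarrow> vscale sE c x I = 0" by (simp add: vscale_def sEs)
  show "x I \<in> E0 \<Longrightarrow> x I \<in> E0 \<Longrightarrow> vscale sE c x I \<in> E0" unfolding vscale_def by (rule subE(3))
  show "x I \<in> E1 \<Longrightarrow> x I \<in> E1 \<Longrightarrow> vscale sE c x I \<in> E1" unfolding vscale_def by (rule subE(4))
qed

lemma Ebar_restr: "x \<in> Ebar E0 E1 (enat N) \<Longrightarrow> (\<lambda>J. if P J then x J else 0) \<in> Ebar E0 E1 (enat N)"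
proof (rule Ebar_pw2[of x _ _ _ x])
  fix I show "x I = 0 \<Longrightarrow> x I = 0 \<Longrightarrow> (if P I then x I else 0) = 0" by simp
  show "x I \<in> E0 \<Longrightarrow> x I \<in> E0 \<Longrightarrow> (if P I then x I else 0) \<in> E0" using subE(5) by simp
  show "x I \<in> E1 \<Longrightarrow> x I \<in> E1 \<Longrightarrow> (if P I then x I else 0) \<in> E1" using subE(6) by simp
qed

lemma I_Ebar: "w \<in> I \<Longrightarrow> w \<in> Ebar E0 E1 (enat N)" unfolding Ebar_ideal_def by auto
lemma I_zero: "w \<in> I \<Longrightarrow> p \<notin> J \<Longrightarrow> w J = 0" unfolding Ebar_ideal_def by auto
lemma I_vadd: "v \<in> I \<Longrightarrow> w \<in> I \<Longrightarrow> vadd v w \<in> I"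
  unfolding Ebar_ideal_def using Ebar_vadd by (auto simp: vadd_def)
lemma I_vscale: "w \<in> I \<Longrightarrow> vscale sE c w \<in> I"
  unfolding Ebar_ideal_def using Ebar_vscale by (auto simp: vscale_def sEs)
lemma I_0: "(\<lambda>_. 0) \<in> I"
  unfolding Ebar_ideal_def Ebar_def TE_def using subE by auto
lemma I_Pp: "x \<in> Ebar E0 E1 (enat N) \<Longrightarrow> Pp p x \<in> I"
  unfolding Ebar_ideal_def Pp_def using Ebar_restr[of x "\<lambda>J. p \<in> J"] by auto

lemma UU_vadd: "x \<in> UU \<Longrightarrow> w \<in> I \<Longrightarrow> vadd x w \<in> UU"
  by (rule UU_body[of x]) (use UU_sub Ebar_vadd I_Ebar I_zero in \<open>auto simp: vadd_def\<close>)
lemma UU_Qp: "x \<in> UU \<Longrightarrow> Qp p x \<in> UU"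
proof (rule UU_body[of x])
  assume x: "x \<in> UU"
  have "(\<lambda>J. if p \<notin> J then x J else 0) \<in> Ebar E0 E1 (enat N)"
    using UU_sub x Ebar_restr[of x "\<lambda>J. p \<notin> J"] by auto
  moreover have "(\<lambda>J. if p \<notin> J then x J else 0) = Qp p x" by (auto simp: Qp_def)
  ultimately show "Qp p x \<in> Ebar E0 E1 (enat N)" by simp
qed (auto simp: Qp_def)

lemma f_fin: "x \<in> UU \<Longrightarrow> finite {I. f x I \<noteq> 0}"
  using f_in Ebar_sub_TE TE_fin by blast

lemma x_fin: "x \<in> UU \<Longrightarrow> finite {I. x I \<noteq> 0}"
  using UU_sub Ebar_sub_TE TE_fin by blast

end



context core
begin

lemma Qp_zero: "Qp p a = a \<Longrightarrow> p \<in> J \<Longrightarrow> a J = 0"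
  by (metis Qp_def)

lemma vadd_vscale0: "vadd a (vscale sE 0 w) = a"
  by (simp add: vadd_def vscale_def sEs)

lemma stepA:
  assumes a: "a \<in> UU" "Qp p a = a" and w: "w \<in> I"
  shows "f (vadd a (vscale sE s w)) = vadd (f a) (vscale sF s (Pp p (f (vadd a w))))"
proof -
  define F where "F = f (vadd a w)"
  have v: "vadd a w \<in> UU" using UU_vadd a w by blast
  have e1: "Emap sE (phi p c) (vadd a w) = vadd a (vscale sE c w)" for c
  proof -
    have "Emap sE (phi p c) (vadd a w) = (\<lambda>J. if p \<in> J then sE c (vadd a w J) else vadd a w J)"
      by (rule Emap_phi[OF mE x_fin[OF v]])
    also have "\<dots> = vadd a (vscale sE c w)"
    proof
      fix J show "(if p \<in> J then sE c (vadd a w J) else vadd a w J) = vadd a (vscale sE c w) J"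
        using Qp_zero[OF a(2), of J] I_zero[OF w, of J] by (cases "p \<in> J") (simp_all add: vadd_def vscale_def sEs)
    qed
    finally show ?thesis .
  qed
  have ff: "f (vadd a (vscale sE c w)) = (\<lambda>J. if p \<in> J then sF c (F J) else F J)" for c
  proof -
    have "f (vadd a (vscale sE c w)) = Emap sF (phi p c) F"
      unfolding F_def using f_nat[OF v, of c] e1[of c] by simp
    also have "\<dots> = (\<lambda>J. if p \<in> J then sF c (F J) else F J)"
      unfolding F_def by (rule Emap_phi[OF mF f_fin[OF v]])
    finally show ?thesis .
  qed
  have fa: "f a = (\<lambda>J. if p \<in> J then 0 else F J)"
  proof -
    have "f a = f (vadd a (vscale sE 0 w))" by (simp only: vadd_vscale0)
    also have "\<dots> = (\<lambda>J. if p \<in> J then sF 0 (F J) else F J)" by (rule ff)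
    also have "\<dots> = (\<lambda>J. if p \<in> J then 0 else F J)" by (simp only: sFs)
    finally show ?thesis .
  qed
  show ?thesis
  proof
    fix J show "f (vadd a (vscale sE s w)) J = vadd (f a) (vscale sF s (Pp p (f (vadd a w)))) J"
      unfolding ff fa F_def[symmetric] by (cases "p \<in> J") (simp_all add: vadd_def vscale_def Pp_def sFs)
  qed
qed

end



context core
begin

abbreviation "XX \<equiv> Etop E0 E1 (enat N)"
abbreviation "YY \<equiv> Etop F0 F1 (enat N)"

lemma cont_sE_left: "continuous_on UNIV (\<lambda>t. sE t c)"
proof -
  have "continuous_on UNIV (\<lambda>t. (\<lambda>p. sE (fst p) (snd p)) (t, c))"
    by (rule continuous_on_compose2[OF gtm_cont[OF E_mod]]) (auto intro!: continuous_intros)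
  then show ?thesis by simp
qed

lemma path_cont:
  assumes z0: "z0 \<in> UU" and w1: "w1 \<in> I"
  shows "continuous_map euclidean XX (\<lambda>t. vadd z0 (vscale sE t w1))"
proof (rule cont_into_Etop)
  fix t show "vadd z0 (vscale sE t w1) \<in> Ebar E0 E1 (enat N)"
    using z0 w1 UU_sub I_Ebar Ebar_vadd Ebar_vscale by blast
next
  fix J
  have "continuous_on UNIV (\<lambda>t. z0 J + sE t (w1 J))"
    by (intro continuous_intros cont_sE_left)
  then show "continuous_map euclidean euclidean (\<lambda>t. vadd z0 (vscale sE t w1) J)"
    by (simp add: vadd_def vscale_def)
qed

lemma wit_cont: "continuous_map (subtopology (prod_topology XX (prod_topology XX euclidean)) (C1_dom sE XX UU)) YY g1"
  using wit unfolding C1_wit_def by blast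

lemma wit_eq: "(x, v, t) \<in> C1_dom sE XX UU \<Longrightarrow> vdiff (f (vadd x (vscale sE t v))) (f x) = vscale sF t (g1 (x, v, t))"
  using wit unfolding C1_wit_def by blast

lemma dom_mem: "z \<in> UU \<Longrightarrow> w \<in> I \<Longrightarrow> (z, w, t) \<in> C1_dom sE XX UU"
  unfolding C1_dom_def topspace_Etop_fin using UU_vadd I_vscale I_Ebar by blast

lemma Lim:
  assumes z0: "z0 \<in> UU" and w1: "w1 \<in> I" and w2: "w2 \<in> I"
    and eq: "\<And>t. (\<exists>v. t * v = 1) \<Longrightarrow> g1 (vadd z0 (vscale sE t w1), w2, t) J = c"
  shows "g1 (z0, w2, 0) J = c"
proof -
  define m where "m = (\<lambda>t. (vadd z0 (vscale sE t w1), w2, t))"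
  have mdom: "m t \<in> C1_dom sE XX UU" for t
    unfolding m_def using dom_mem UU_vadd I_vscale z0 w1 w2 by blast
  have w2t: "w2 \<in> topspace XX" using w2 I_Ebar topspace_Etop_fin by blast
  have mc0: "continuous_map euclidean (prod_topology XX (prod_topology XX euclidean)) m"
    unfolding m_def
    by (intro continuous_map_pairedI path_cont[OF z0 w1]) (simp_all add: w2t continuous_on_id)
  have mc: "continuous_map euclidean (subtopology (prod_topology XX (prod_topology XX euclidean)) (C1_dom sE XX UU)) m"
    unfolding continuous_map_in_subtopology using mc0 mdom by blast
  have hc: "continuous_map euclidean euclidean ((\<lambda>F. F J) \<circ> g1 \<circ> m)"
    using continuous_map_compose[OF mc continuous_map_compose[OF wit_cont cont_ev_Etop]] by (simp add: o_assoc)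
  then have hc': "continuous_on (closure {u::'r. \<exists>v. u * v = 1}) ((\<lambda>F. F J) \<circ> g1 \<circ> m)"
    by (simp add: units_dense)
  have "((\<lambda>F. F J) \<circ> g1 \<circ> m) 0 = c"
    by (rule continuous_constant_on_closure[OF hc']) (auto simp: m_def eq units_dense)
  then show ?thesis by (simp add: m_def vadd_vscale0)
qed

end



context core
begin

definition "Bf a w = Pp p (f (vadd a w))"

lemma vscale1E: "vscale sE 1 w = w" by (simp add: vscale_def sEs)
lemma vscale1F: "vscale sF 1 w = w" by (simp add: vscale_def sFs)

lemma unit_cancel:
  assumes "t * v = 1" "sF t X = sF t Y" shows "X = Y"
proof -
  have "X = sF (v * t) X" using assms(1) by (simp add: sFs mult.commute)
  also have "\<dots> = sF v (sF t X)" by (simp add: sFs)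
  also have "\<dots> = sF v (sF t Y)" using assms(2) by simp
  also have "\<dots> = sF (v * t) Y" by (simp add: sFs)
  also have "\<dots> = Y" using assms(1) by (simp add: sFs mult.commute)
  finally show ?thesis .
qed

lemma f_a_form:
  assumes a: "a \<in> UU" "Qp p a = a" and w: "w \<in> I"
  shows "f (vadd a w) = vadd (f a) (Bf a w)"
  using stepA[OF a w, of 1] by (simp add: vscale1E vscale1F Bf_def)

lemma B_scale:
  assumes a: "a \<in> UU" "Qp p a = a" and w: "w \<in> I"
  shows "Bf a (vscale sE t w) J = sF t (Bf a w J)"
proof -
  have "vadd (f a) (Bf a (vscale sE t w)) = vadd (f a) (vscale sF t (Bf a w))"
    using f_a_form[OF a I_vscale[OF w, of t]] stepA[OF a w, of t] by (simp add: Bf_def)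
  then have "f a J + Bf a (vscale sE t w) J = f a J + sF t (Bf a w J)"
    unfolding vadd_def vscale_def by meson
  then show ?thesis by simp
qed

lemma stepC:
  assumes a: "a \<in> UU" "Qp p a = a" and w1: "w1 \<in> I" and w2: "w2 \<in> I"
  shows "g1 (a, w2, 0) J = Bf a (vadd w1 w2) J - Bf a w1 J"
proof (rule Lim[OF a(1) w1 w2])
  fix t :: 'r assume "\<exists>v. t * v = 1"
  then obtain v where tv: "t * v = 1" by blast
  define z where "z = vadd a (vscale sE t w1)"
  have z: "z \<in> UU" unfolding z_def using UU_vadd a I_vscale w1 by blast
  have e: "vdiff (f (vadd z (vscale sE t w2))) (f z) = vscale sF t (g1 (z, w2, t))"
    by (rule wit_eq[OF dom_mem[OF z w2]])
  have zz: "vadd z (vscale sE t w2) = vadd a (vscale sE t (vadd w1 w2))"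
    unfolding z_def by (auto simp: vadd_def vscale_def sEs add.assoc)
  have f1: "f (vadd z (vscale sE t w2)) = vadd (f a) (vscale sF t (Bf a (vadd w1 w2)))"
    unfolding zz Bf_def by (rule stepA[OF a I_vadd[OF w1 w2]])
  have f2: "f z = vadd (f a) (vscale sF t (Bf a w1))"
    unfolding z_def Bf_def by (rule stepA[OF a w1])
  have "(f a J + sF t (Bf a (vadd w1 w2) J)) - (f a J + sF t (Bf a w1 J)) = sF t (g1 (z, w2, t) J)"
  proof -
    have "vdiff (vadd (f a) (vscale sF t (Bf a (vadd w1 w2)))) (vadd (f a) (vscale sF t (Bf a w1))) J
        = vscale sF t (g1 (z, w2, t)) J"
      using e unfolding f1 f2 by simp
    then show ?thesis by (simp only: vdiff_def vadd_def vscale_def)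
  qed
  then have "sF t (Bf a (vadd w1 w2) J - Bf a w1 J) = sF t (g1 (z, w2, t) J)"
    by (simp add: module.scale_right_diff_distrib[OF mF])
  then show "g1 (vadd a (vscale sE t w1), w2, t) J = Bf a (vadd w1 w2) J - Bf a w1 J"
    using unit_cancel[OF tv] unfolding z_def by metis
qed

lemma B_add:
  assumes a: "a \<in> UU" "Qp p a = a" and w1: "w1 \<in> I" and w2: "w2 \<in> I"
  shows "Bf a (vadd w1 w2) J = Bf a w1 J + Bf a w2 J"
proof -
  have 1: "g1 (a, w2, 0) J = Bf a (vadd w1 w2) J - Bf a w1 J" by (rule stepC[OF a w1 w2])
  have 2: "g1 (a, w2, 0) J = Bf a (vadd (\<lambda>_. 0) w2) J - Bf a (\<lambda>_. 0) J" by (rule stepC[OF a I_0 w2])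
  have v0: "vadd (\<lambda>_. 0) w2 = w2" by (simp add: vadd_def)
  have s0: "vscale sE 0 w2 = (\<lambda>_. 0)" by (simp add: vscale_def sEs)
  have b0: "Bf a (\<lambda>_. 0) J = 0" using B_scale[OF a w2, of 0 J] by (simp add: s0 sFs)
  show ?thesis using 1 2 v0 b0 by (simp add: algebra_simps)
qed

lemma core_main:
  assumes x: "x \<in> UU" and y: "y \<in> I"
  shows "f (vadd x y) = vadd (f x) (g1 (x, y, 0))"
proof -
  define a where "a = Qp p x"
  define xp where "xp = Pp p x"
  have a: "a \<in> UU" "Qp p a = a" unfolding a_def using UU_Qp[OF x] by (auto simp: Qp_def)
  have xp: "xp \<in> I" unfolding xp_def using I_Pp UU_sub x by blast
  have xa: "x = vadd a xp" by (auto simp: a_def xp_def vadd_def Qp_def Pp_def)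
  have ft: "f (vadd x (vscale sE t y)) J = f x J + sF t (Bf a y J)" for t J
  proof -
    have "vadd x (vscale sE t y) = vadd a (vadd xp (vscale sE t y))"
      unfolding xa by (simp add: vadd_def add.assoc)
    then have "f (vadd x (vscale sE t y)) J = f a J + Bf a (vadd xp (vscale sE t y)) J"
      using f_a_form[OF a I_vadd[OF xp I_vscale[OF y]]] by (simp add: vadd_def)
    also have "\<dots> = f a J + Bf a xp J + sF t (Bf a y J)"
      using B_add[OF a xp I_vscale[OF y]] B_scale[OF a y] by (simp add: add.assoc)
    also have "f a J + Bf a xp J = f x J"
      using f_a_form[OF a xp] xa by (simp add: vadd_def)
    finally show ?thesis .
  qed
  have g: "g1 (x, y, 0) J = Bf a y J" for J
  proof (rule Lim[OF x I_0 y])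
    fix t :: 'r assume "\<exists>v. t * v = 1"
    then obtain v where tv: "t * v = 1" by blast
    have xx: "vadd x (vscale sE t (\<lambda>_. 0)) = x" by (simp add: vadd_def vscale_def sEs)
    have "vdiff (f (vadd x (vscale sE t y))) (f x) = vscale sF t (g1 (x, y, t))"
      by (rule wit_eq[OF dom_mem[OF x y]])
    then have "f (vadd x (vscale sE t y)) J - f x J = sF t (g1 (x, y, t) J)"
      unfolding vdiff_def vscale_def by meson
    then have "sF t (Bf a y J) = sF t (g1 (x, y, t) J)" using ft[of t J] by simp
    then show "g1 (vadd x (vscale sE t (\<lambda>_. 0)), y, t) J = Bf a y J"
      unfolding xx using unit_cancel[OF tv] by metis
  qed
  show ?thesis
  proof
    fix J show "f (vadd x y) J = vadd (f x) (g1 (x, y, 0)) J"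
      using ft[of 1 J] g[of J] by (simp add: vscale1E sFs vadd_def)
  qed
qed

end



locale setting =
  fixes sE :: "'r::{comm_ring_1,topological_ab_group_add,topological_semigroup_mult,t2_space} \<Rightarrow> 'e::{topological_ab_group_add,t2_space} \<Rightarrow> 'e"
    and sF :: "'r \<Rightarrow> 'f::{topological_ab_group_add,t2_space} \<Rightarrow> 'f"
    and E0 E1 :: "'e set" and F0 F1 :: "'f set"
    and U :: "enat \<Rightarrow> (nat set \<Rightarrow> 'e) set"
    and f :: "enat \<Rightarrow> (nat set \<Rightarrow> 'e) \<Rightarrow> (nat set \<Rightarrow> 'f)"
  assumes units_dense: "closure {u::'r. \<exists>v. u * v = 1} = UNIV"
    and E_mod: "graded_top_module sE E0 E1"
    and F_mod: "graded_top_module sF F0 F1"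
    and U_open: "\<And>N::nat. openin (Etop E0 E1 (enat N)) (U (enat N))"
    and U_sub: "\<And>n. U n = {x \<in> Ebar E0 E1 n. Emap sE geps x \<in> U 0}"
    and f_cont: "\<And>N::nat. continuous_map (subtopology (Etop E0 E1 (enat N)) (U (enat N)))
                               (Etop F0 F1 (enat N)) (f (enat N))"
    and f_nat: "\<And>(N::nat) (M::nat) \<phi>. gmorph (enat N) (enat M) \<phi> \<Longrightarrow>
                  \<forall>x\<in>U (enat N). Emap sF \<phi> (f (enat N) x) = f (enat M) (Emap sE \<phi> x)"
    and f_inf: "\<And>(N::nat) x. x \<in> U (enat N) \<Longrightarrow> f \<infinity> x = f (enat N) x"
begin

lemma mE: "module sE" using gtm_module[OF E_mod] .
lemma mF: "module sF" using gtm_module[OF F_mod] .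

lemma U_Ebar: "U n \<subseteq> Ebar E0 E1 n" using U_sub[of n] by blast

lemma U_body:
  assumes x: "x \<in> U n" and z: "z \<in> Ebar E0 E1 n" and e: "z {} = x {}"
  shows "z \<in> U n"
proof -
  have xe: "x \<in> Ebar E0 E1 n" using x U_Ebar by blast
  have "Emap sE geps z = Emap sE geps x"
  proof -
    have "z \<in> TE n" "x \<in> TE n" using xe z Ebar_sub_TE by blast+
    then have fz: "finite {I. z I \<noteq> 0}" and fx: "finite {I. x I \<noteq> 0}" by (auto intro: TE_fin)
    show ?thesis unfolding Emap_geps[OF mE fz] Emap_geps[OF mE fx] e by simp
  qed
  moreover have "Emap sE geps x \<in> U 0" using x U_sub[of n] by blast
  ultimately show ?thesis using z U_sub[of n] by auto
qed

lemma f_in: "x \<in> U (enat N) \<Longrightarrow> f (enat N) x \<in> Ebar F0 F1 (enat N)"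
proof -
  assume x: "x \<in> U (enat N)"
  have "x \<in> topspace (subtopology (Etop E0 E1 (enat N)) (U (enat N)))"
    using x U_Ebar by (auto simp: topspace_Etop_fin)
  then show ?thesis
    using continuous_map_image_subset_topspace[OF f_cont[of N]] topspace_Etop_fin by blast
qed

lemma core_ok:
  assumes w: "C1_wit sE sF (Etop E0 E1 (enat N)) (Etop F0 F1 (enat N)) (U (enat N)) (f (enat N)) g1"
  shows "core sE sF E0 E1 F0 F1 N (U (enat N)) (f (enat N)) g1 p"
proof
  show "closure {u::'r. \<exists>v. u * v = 1} = UNIV" by (rule units_dense)
  show "graded_top_module sE E0 E1" by (rule E_mod)
  show "graded_top_module sF F0 F1" by (rule F_mod)
  show "U (enat N) \<subseteq> Ebar E0 E1 (enat N)" by (rule U_Ebar)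
  show "\<And>x z. x \<in> U (enat N) \<Longrightarrow> z \<in> Ebar E0 E1 (enat N) \<Longrightarrow> z {} = x {} \<Longrightarrow> z \<in> U (enat N)"
    by (rule U_body)
  show "\<And>x. x \<in> U (enat N) \<Longrightarrow> f (enat N) x \<in> Ebar F0 F1 (enat N)" by (rule f_in)
  show "\<And>s x. x \<in> U (enat N) \<Longrightarrow> Emap sF (phi p s) (f (enat N) x) = f (enat N) (Emap sE (phi p s) x)"
    using f_nat[OF gmorph_phi] by blast
  show "C1_wit sE sF (Etop E0 E1 (enat N)) (Etop F0 F1 (enat N)) (U (enat N)) (f (enat N)) g1" by (rule w)
qed

lemma core_inst:
  assumes w: "C1_wit sE sF (Etop E0 E1 (enat N)) (Etop F0 F1 (enat N)) (U (enat N)) (f (enat N)) g1"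
    and x: "x \<in> U (enat N)" and y: "y \<in> Ebar_ideal E0 E1 (enat N) p"
  shows "f (enat N) (vadd x y) = vadd (f (enat N) x) (g1 (x, y, 0))"
proof -
  interpret core sE sF E0 E1 F0 F1 N "U (enat N)" "f (enat N)" g1 p by (rule core_ok[OF w])
  show ?thesis by (rule core_main[OF x y])
qed

lemma part1':
  assumes "\<exists>g1. C1_wit sE sF (Etop E0 E1 (enat N)) (Etop F0 F1 (enat N)) (U (enat N)) (f (enat N)) g1"
    and x: "x \<in> U (enat N)" and y: "y \<in> Ebar_ideal E0 E1 (enat N) p"
  shows "f (enat N) (vadd x y) = vadd (f (enat N) x)
              (dC1 sE sF (Etop E0 E1 (enat N)) (Etop F0 F1 (enat N)) (U (enat N)) (f (enat N)) x y)"
proof -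
  have "C1_wit sE sF (Etop E0 E1 (enat N)) (Etop F0 F1 (enat N)) (U (enat N)) (f (enat N))
     (SOME g1. C1_wit sE sF (Etop E0 E1 (enat N)) (Etop F0 F1 (enat N)) (U (enat N)) (f (enat N)) g1)"
    using assms(1) by (rule someI_ex)
  from core_inst[OF this x y] show ?thesis unfolding dC1_def .
qed

lemma part1:
  assumes "is_C1 sE sF (Etop E0 E1 (enat N)) (Etop F0 F1 (enat N)) (U (enat N)) (f (enat N))"
    and x: "x \<in> U (enat N)" and y: "y \<in> Ebar_ideal E0 E1 (enat N) p"
  shows "f (enat N) (vadd x y) = vadd (f (enat N) x)
              (dC1 sE sF (Etop E0 E1 (enat N)) (Etop F0 F1 (enat N)) (U (enat N)) (f (enat N)) x y)"
  by (rule part1'[OF _ x y]) (use assms(1) in \<open>unfold is_C1_def, blast\<close>)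

end



definition Pinf :: "(nat set \<Rightarrow> 'e::{zero,topological_space}) set \<Rightarrow> bool" where
  "Pinf A \<longleftrightarrow> A \<subseteq> TE \<infinity> \<and> (\<forall>N. openin (TEtop_fin N) (A \<inter> TE (enat N)))"

lemma istop_Pinf: "istopology (Pinf :: (nat set \<Rightarrow> 'e::{zero,topological_space}) set \<Rightarrow> bool)"
  unfolding istopology_def
proof (intro conjI allI impI)
  fix S T :: "(nat set \<Rightarrow> 'e) set" assume "Pinf S" "Pinf T"
  then show "Pinf (S \<inter> T)" unfolding Pinf_def
  proof (intro conjI allI)
    fix N
    assume a: "S \<subseteq> TE \<infinity> \<and> (\<forall>N. openin (TEtop_fin N) (S \<inter> TE (enat N)))"
      "T \<subseteq> TE \<infinity> \<and> (\<forall>N. openin (TEtop_fin N) (T \<inter> TE (enat N)))"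
    have "S \<inter> T \<inter> TE (enat N) = (S \<inter> TE (enat N)) \<inter> (T \<inter> TE (enat N))" by blast
    then show "openin (TEtop_fin N) (S \<inter> T \<inter> TE (enat N))" using a by (simp add: openin_Int)
  qed (use \<open>Pinf S\<close> in \<open>auto simp: Pinf_def\<close>)
next
  fix K :: "(nat set \<Rightarrow> 'e) set set" assume K: "\<forall>A\<in>K. Pinf A"
  show "Pinf (\<Union>K)" unfolding Pinf_def
  proof (intro conjI allI)
    show "\<Union>K \<subseteq> TE \<infinity>" using K by (auto simp: Pinf_def)
    fix N
    have "\<Union>K \<inter> TE (enat N) = \<Union>((\<lambda>A. A \<inter> TE (enat N)) ` K)" by blast
    moreover have "openin (TEtop_fin N) (\<Union>((\<lambda>A. A \<inter> TE (enat N)) ` K))"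
      by (rule openin_Union) (use K in \<open>auto simp: Pinf_def\<close>)
    ultimately show "openin (TEtop_fin N) (\<Union>K \<inter> TE (enat N))" by simp
  qed
qed

lemma TEtop_inf: "TEtop \<infinity> = topology Pinf"
  unfolding TEtop_def Pinf_def by simp

lemma openin_TEtop_inf: "openin (TEtop \<infinity>) A \<longleftrightarrow> Pinf A"
  unfolding TEtop_inf by (simp add: topology_inverse'[OF istop_Pinf])

lemma TE_mono: "N \<le> M \<Longrightarrow> TE (enat N) \<subseteq> TE (enat M)"
  unfolding TE_def idx_ok_def by (auto intro: less_le_trans)

lemma TE_fin_inf: "TE (enat N) \<subseteq> TE \<infinity>"
  unfolding TE_def idx_ok_def by auto

lemma topspace_TEtop_inf: "topspace (TEtop \<infinity>) = (TE \<infinity> :: (nat set \<Rightarrow> 'e::{zero,topological_space}) set)"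
proof
  show "topspace (TEtop \<infinity>) \<subseteq> (TE \<infinity> :: (nat set \<Rightarrow> 'e) set)"
    unfolding topspace_def openin_TEtop_inf Pinf_def by blast
  have "Pinf (TE \<infinity> :: (nat set \<Rightarrow> 'e) set)"
    unfolding Pinf_def
  proof (intro conjI allI)
    fix N
    have "TE \<infinity> \<inter> TE (enat N) = topspace (TEtop_fin N :: (nat set \<Rightarrow> 'e) topology)"
      using TE_fin_inf topspace_TEtop_fin by blast
    then show "openin (TEtop_fin N) ((TE \<infinity> :: (nat set \<Rightarrow> 'e) set) \<inter> TE (enat N))" by simp
  qed simp
  then show "(TE \<infinity> :: (nat set \<Rightarrow> 'e) set) \<subseteq> topspace (TEtop \<infinity>)"
    unfolding topspace_def openin_TEtop_inf by blast
qed

lemma cont_ev_inf: "continuous_map (TEtop \<infinity>) euclidean (\<lambda>x::nat set \<Rightarrow> 'e::{zero,topological_space}. x J)"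
  unfolding continuous_map_def
proof (intro conjI allI impI)
  show "(\<lambda>x. x J) \<in> topspace (TEtop \<infinity>) \<rightarrow> topspace euclidean" by simp
  fix W :: "'e set" assume W: "openin euclidean W"
  show "openin (TEtop \<infinity>) {x \<in> topspace (TEtop \<infinity>). x J \<in> W}"
    unfolding openin_TEtop_inf Pinf_def topspace_TEtop_inf
  proof (intro conjI allI)
    fix N
    have "{x \<in> TE \<infinity>. x J \<in> W} \<inter> TE (enat N) = {x \<in> topspace (TEtop_fin N). x J \<in> W}"
      using TE_fin_inf topspace_TEtop_fin by blast
    then show "openin (TEtop_fin N) ({x::nat set \<Rightarrow> 'e \<in> TE \<infinity>. x J \<in> W} \<inter> TE (enat N))"
      using openin_continuous_map_preimage[OF cont_ev_fin W] by simp
  qed blast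
qed

lemma cont_fin_inf: "continuous_map (TEtop_fin N) (TEtop \<infinity>) (\<lambda>x::nat set \<Rightarrow> 'e::{zero,topological_space}. x)"
  unfolding continuous_map_def
proof (intro conjI allI impI)
  show "(\<lambda>x::nat set \<Rightarrow> 'e. x) \<in> topspace (TEtop_fin N) \<rightarrow> topspace (TEtop \<infinity>)"
    using TE_fin_inf by (auto simp: topspace_TEtop_fin topspace_TEtop_inf)
  fix A :: "(nat set \<Rightarrow> 'e) set" assume "openin (TEtop \<infinity>) A"
  then have "openin (TEtop_fin N) (A \<inter> TE (enat N))" unfolding openin_TEtop_inf Pinf_def by blast
  moreover have "{x \<in> topspace (TEtop_fin N). x \<in> A} = A \<inter> TE (enat N)"
    by (auto simp: topspace_TEtop_fin)
  ultimately show "openin (TEtop_fin N) {x \<in> topspace (TEtop_fin N). x \<in> A}" by simp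
qed

lemma Etop_inf: "Etop A B \<infinity> = subtopology (TEtop \<infinity>) (Ebar A B \<infinity>)"
  unfolding Etop_def ..

lemma topspace_Etop_inf: "topspace (Etop A B \<infinity>) = Ebar A B \<infinity>"
  unfolding Etop_inf using Ebar_sub_TE[of A B \<infinity>] by (auto simp: topspace_TEtop_inf)

lemma Ebar_fin_inf: "Ebar A B (enat N) \<subseteq> Ebar A B \<infinity>"
  unfolding Ebar_def using TE_fin_inf by blast

lemma cont_Etop_fin_inf: "continuous_map (Etop A B (enat N)) (Etop A B \<infinity>) (\<lambda>x. x)"
  unfolding Etop_fin Etop_inf continuous_map_in_subtopology
proof
  show "continuous_map (subtopology (TEtop_fin N) (Ebar A B (enat N))) (TEtop \<infinity>) (\<lambda>x. x)"
    by (rule continuous_map_from_subtopology[OF cont_fin_inf])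
  show "(\<lambda>x. x) \<in> topspace (subtopology (TEtop_fin N) (Ebar A B (enat N))) \<rightarrow> Ebar A B \<infinity>"
    using Ebar_fin_inf[of A B N] unfolding topspace_subtopology by blast
qed

lemma cont_ev_Etop_inf: "continuous_map (Etop A B \<infinity>) euclidean (\<lambda>x. x J)"
  unfolding Etop_inf by (rule continuous_map_from_subtopology[OF cont_ev_inf])

definition projN :: "nat \<Rightarrow> (nat set \<Rightarrow> 'e::zero) \<Rightarrow> nat set \<Rightarrow> 'e" where
  "projN N F = (\<lambda>J. if J \<subseteq> {..<N} then F J else 0)"

lemma projN_Ebar:
  assumes F: "F \<in> Ebar A B n" and z: "0 \<in> A" "0 \<in> B"
  shows "projN N F \<in> Ebar A B (enat N)"
proof -
  have "finite {J. F J \<noteq> 0}" using F Ebar_sub_TE TE_fin by blast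
  moreover have "{J. projN N F J \<noteq> 0} \<subseteq> {J. F J \<noteq> 0}" by (auto simp: projN_def)
  ultimately have "finite {J. projN N F J \<noteq> 0}" using finite_subset by blast
  moreover have "\<forall>J. projN N F J \<noteq> 0 \<longrightarrow> idx_ok (enat N) J"
  proof (intro allI impI)
    fix J assume "projN N F J \<noteq> 0"
    then have "J \<subseteq> {..<N}" unfolding projN_def by (metis (full_types))
    then have "finite J" using finite_subset[OF _ finite_lessThan] by blast
    with \<open>J \<subseteq> {..<N}\<close> show "idx_ok (enat N) J" unfolding idx_ok_def by auto
  qed
  moreover have "\<forall>J. projN N F J \<in> (if even (card J) then A else B)"
  proof
    fix J have "F J \<in> (if even (card J) then A else B)" using F unfolding Ebar_def by blast
    then show "projN N F J \<in> (if even (card J) then A else B)" using z by (cases "even (card J)") (simp_all add: projN_def)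
  qed
  ultimately show ?thesis unfolding Ebar_def TE_def by blast
qed

lemma cont_projN:
  assumes z: "0 \<in> A" "0 \<in> B"
  shows "continuous_map (Etop A B \<infinity>) (Etop A B (enat N)) (projN N)"
proof (rule cont_into_Etop)
  fix x assume "x \<in> topspace (Etop A B \<infinity>)"
  then show "projN N x \<in> Ebar A B (enat N)" using projN_Ebar z topspace_Etop_inf by blast
next
  fix J
  show "continuous_map (Etop A B \<infinity>) euclidean (\<lambda>x. projN N x J)"
  proof (cases "J \<subseteq> {..<N}")
    case True then show ?thesis by (simp add: projN_def cont_ev_Etop_inf)
  next
    case False then show ?thesis by (simp add: projN_def)
  qed
qed

lemma TE_bound: "x \<in> TE \<infinity> \<Longrightarrow> \<exists>N. x \<in> TE (enat N)"
proof -
  assume x: "x \<in> TE \<infinity>"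
  have "finite (\<Union>{I. x I \<noteq> 0})" using x unfolding TE_def idx_ok_def by auto
  then obtain N where N: "\<Union>{I. x I \<noteq> 0} \<subseteq> {..<N}" using finite_nat_bounded by blast
  have "\<forall>I. x I \<noteq> 0 \<longrightarrow> idx_ok (enat N) I"
  proof (intro allI impI)
    fix I assume xi: "x I \<noteq> 0"
    then have "I \<subseteq> {..<N}" using N by blast
    moreover have "finite I" using x xi unfolding TE_def idx_ok_def by blast
    ultimately show "idx_ok (enat N) I" unfolding idx_ok_def by auto
  qed
  then have "x \<in> TE (enat N)" using x unfolding TE_def by blast
  then show ?thesis by blast
qed




context setting
begin

lemma F0z: "0 \<in> F0" and F1z: "0 \<in> F1"
  using module.subspace_0[OF mF gtm_subA[OF F_mod]] module.subspace_0[OF mF gtm_subB[OF F_mod]] by auto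

lemma Ebar_level: "x \<in> Ebar A B n \<Longrightarrow> x \<in> TE m \<Longrightarrow> x \<in> Ebar A B m"
  unfolding Ebar_def by blast

lemma U_fin_inf: "U (enat N) \<subseteq> U \<infinity>"
  using U_sub[of "enat N"] U_sub[of \<infinity>] Ebar_fin_inf[of E0 E1 N] by blast

lemma U_inf_fin: "x \<in> U \<infinity> \<Longrightarrow> x \<in> TE (enat N) \<Longrightarrow> x \<in> U (enat N)"
  using U_sub[of "enat N"] U_sub[of \<infinity>] Ebar_level by blast

lemma wit_N:
  assumes w: "C1_wit sE sF (Etop E0 E1 \<infinity>) (Etop F0 F1 \<infinity>) (U \<infinity>) (f \<infinity>) g"
  shows "C1_wit sE sF (Etop E0 E1 (enat N)) (Etop F0 F1 (enat N)) (U (enat N)) (f (enat N)) (projN N \<circ> g)"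
proof -
  let ?XN = "Etop E0 E1 (enat N)" and ?XI = "Etop E0 E1 \<infinity>"
  let ?YN = "Etop F0 F1 (enat N)" and ?YI = "Etop F0 F1 \<infinity>"
  have domsub: "C1_dom sE ?XN (U (enat N)) \<subseteq> C1_dom sE ?XI (U \<infinity>)"
    unfolding C1_dom_def topspace_Etop_fin topspace_Etop_inf
    using U_fin_inf[of N] Ebar_fin_inf[of E0 E1 N] by blast
  have c1: "continuous_map (prod_topology ?XN euclidean) (prod_topology ?XI euclidean) id"
    using continuous_map_prod_top[of ?XN euclidean ?XI euclidean "\<lambda>x. x" "\<lambda>x. x"] cont_Etop_fin_inf[of E0 E1 N]
    by (simp add: case_prod_Pair_iden)
  have c2: "continuous_map (prod_topology ?XN (prod_topology ?XN euclidean)) (prod_topology ?XI (prod_topology ?XI euclidean)) id"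
    using continuous_map_prod_top[of ?XN "prod_topology ?XN euclidean" ?XI "prod_topology ?XI euclidean" "\<lambda>x. x" "\<lambda>x. x"]
      cont_Etop_fin_inf[of E0 E1 N] c1
    by (simp add: case_prod_Pair_iden id_def) blast
  have inc: "continuous_map (subtopology (prod_topology ?XN (prod_topology ?XN euclidean)) (C1_dom sE ?XN (U (enat N))))
     (subtopology (prod_topology ?XI (prod_topology ?XI euclidean)) (C1_dom sE ?XI (U \<infinity>))) id"
    unfolding continuous_map_in_subtopology
  proof
    show "continuous_map (subtopology (prod_topology ?XN (prod_topology ?XN euclidean)) (C1_dom sE ?XN (U (enat N))))
        (prod_topology ?XI (prod_topology ?XI euclidean)) id"
      by (rule continuous_map_from_subtopology[OF c2])
    show "id \<in> topspace (subtopology (prod_topology ?XN (prod_topology ?XN euclidean)) (C1_dom sE ?XN (U (enat N))))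
        \<rightarrow> C1_dom sE ?XI (U \<infinity>)"
      using domsub unfolding topspace_subtopology Pi_def by auto
  qed
  have gc: "continuous_map (subtopology (prod_topology ?XI (prod_topology ?XI euclidean)) (C1_dom sE ?XI (U \<infinity>))) ?YI g"
    using w unfolding C1_wit_def by blast
  have cc: "continuous_map (subtopology (prod_topology ?XN (prod_topology ?XN euclidean)) (C1_dom sE ?XN (U (enat N)))) ?YN (projN N \<circ> g)"
    using continuous_map_compose[OF inc continuous_map_compose[OF gc cont_projN[OF F0z F1z, of N]]]
    by (simp add: o_def)
  have eq: "vdiff (f (enat N) (vadd x (vscale sE t v))) (f (enat N) x) = vscale sF t ((projN N \<circ> g) (x, v, t))"
    if d: "(x, v, t) \<in> C1_dom sE ?XN (U (enat N))" for x v t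
  proof -
    have xu: "x \<in> U (enat N)" and zu: "vadd x (vscale sE t v) \<in> U (enat N)"
      using d unfolding C1_dom_def by auto
    have "vdiff (f \<infinity> (vadd x (vscale sE t v))) (f \<infinity> x) = vscale sF t (g (x, v, t))"
      using w domsub d unfolding C1_wit_def by blast
    then have e: "vdiff (f (enat N) (vadd x (vscale sE t v))) (f (enat N) x) = vscale sF t (g (x, v, t))"
      using f_inf[OF xu] f_inf[OF zu] by simp
    show ?thesis
    proof
      fix J
      show "vdiff (f (enat N) (vadd x (vscale sE t v))) (f (enat N) x) J = vscale sF t ((projN N \<circ> g) (x, v, t)) J"
      proof (cases "J \<subseteq> {..<N}")
        case True then show ?thesis using e by (simp add: projN_def vscale_def)
      next
        case False
        have "f (enat N) (vadd x (vscale sE t v)) J = 0" "f (enat N) x J = 0"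
          using f_in[OF zu] f_in[OF xu] Ebar_sub_TE TE_zero False by blast+
        then show ?thesis using False
          by (simp add: projN_def vscale_def vdiff_def module.scale_zero_right[OF mF])
      qed
    qed
  qed
  show ?thesis unfolding C1_wit_def using cc eq by blast
qed

lemma part2_fin:
  assumes "is_C1 sE sF (Etop E0 E1 \<infinity>) (Etop F0 F1 \<infinity>) (U \<infinity>) (f \<infinity>)"
    and x: "x \<in> U (enat N)" and y: "y \<in> Ebar_ideal E0 E1 (enat N) p"
  shows "f (enat N) (vadd x y) = vadd (f (enat N) x)
              (dC1 sE sF (Etop E0 E1 (enat N)) (Etop F0 F1 (enat N)) (U (enat N)) (f (enat N)) x y)"
proof (rule part1'[OF _ x y])
  obtain g where "C1_wit sE sF (Etop E0 E1 \<infinity>) (Etop F0 F1 \<infinity>) (U \<infinity>) (f \<infinity>) g"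
    using assms(1) unfolding is_C1_def by blast
  then show "\<exists>g1. C1_wit sE sF (Etop E0 E1 (enat N)) (Etop F0 F1 (enat N)) (U (enat N)) (f (enat N)) g1"
    using wit_N by blast
qed

end



context setting
begin

lemma part2_inf:
  assumes C: "is_C1 sE sF (Etop E0 E1 \<infinity>) (Etop F0 F1 \<infinity>) (U \<infinity>) (f \<infinity>)"
    and x: "x \<in> U \<infinity>" and y: "y \<in> Ebar_ideal E0 E1 \<infinity> p"
  shows "f \<infinity> (vadd x y) = vadd (f \<infinity> x) (dC1 sE sF (Etop E0 E1 \<infinity>) (Etop F0 F1 \<infinity>) (U \<infinity>) (f \<infinity>) x y)"
proof -
  let ?XI = "Etop E0 E1 \<infinity>" and ?YI = "Etop F0 F1 \<infinity>"
  define g where "g = (SOME g1. C1_wit sE sF ?XI ?YI (U \<infinity>) (f \<infinity>) g1)"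
  have ex: "\<exists>g1. C1_wit sE sF ?XI ?YI (U \<infinity>) (f \<infinity>) g1"
    using C unfolding is_C1_def by blast
  have wg: "C1_wit sE sF ?XI ?YI (U \<infinity>) (f \<infinity>) g"
    unfolding g_def by (rule someI_ex[OF ex])
  have xE: "x \<in> Ebar E0 E1 \<infinity>" using x U_Ebar by blast
  have yE: "y \<in> Ebar E0 E1 \<infinity>" using y unfolding Ebar_ideal_def by blast
  obtain N1 where N1: "x \<in> TE (enat N1)" using TE_bound xE Ebar_sub_TE by blast
  obtain N2 where N2: "y \<in> TE (enat N2)" using TE_bound yE Ebar_sub_TE by blast
  define N where "N = max N1 N2"
  have xN: "x \<in> TE (enat N)" using N1 TE_mono[of N1 N] unfolding N_def by auto
  have yN: "y \<in> TE (enat N)" using N2 TE_mono[of N2 N] unfolding N_def by auto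
  have xU: "x \<in> U (enat N)" by (rule U_inf_fin[OF x xN])
  have yI: "y \<in> Ebar_ideal E0 E1 (enat N) p"
    using y yN Ebar_level unfolding Ebar_ideal_def by blast
  have wN: "C1_wit sE sF (Etop E0 E1 (enat N)) (Etop F0 F1 (enat N)) (U (enat N)) (f (enat N)) (projN N \<circ> g)"
    by (rule wit_N[OF wg])
  interpret c: core sE sF E0 E1 F0 F1 N "U (enat N)" "f (enat N)" "projN N \<circ> g" p
    by (rule core_ok[OF wN])
  have main: "f (enat N) (vadd x y) = vadd (f (enat N) x) (projN N (g (x, y, 0)))"
    using c.core_main[OF xU yI] by simp
  have pz: "projN N (g (x, y, 0)) = g (x, y, 0)"
  proof
    fix J show "projN N (g (x, y, 0)) J = g (x, y, 0) J"
    proof (cases "J \<subseteq> {..<N}")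
      case True then show ?thesis by (simp add: projN_def)
    next
      case False
      define m where "m = (\<lambda>t::'r. (x, y, t))"
      have zU: "vadd x (vscale sE t y) \<in> U (enat N)" for t
        using c.UU_vadd[OF xU c.I_vscale[OF yI]] .
      have mdom: "m t \<in> C1_dom sE ?XI (U \<infinity>)" for t
        unfolding m_def C1_dom_def topspace_Etop_inf using x yE zU U_fin_inf by blast
      have mc0: "continuous_map euclidean (prod_topology ?XI (prod_topology ?XI euclidean)) m"
        unfolding m_def
        by (intro continuous_map_pairedI) (simp_all add: xE yE topspace_Etop_inf continuous_on_id)
      have mc: "continuous_map euclidean (subtopology (prod_topology ?XI (prod_topology ?XI euclidean)) (C1_dom sE ?XI (U \<infinity>))) m"
        unfolding continuous_map_in_subtopology using mc0 mdom by blast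
      have gc: "continuous_map (subtopology (prod_topology ?XI (prod_topology ?XI euclidean)) (C1_dom sE ?XI (U \<infinity>))) ?YI g"
        using wg unfolding C1_wit_def by blast
      have hc: "continuous_map euclidean euclidean ((\<lambda>F. F J) \<circ> g \<circ> m)"
        using continuous_map_compose[OF mc continuous_map_compose[OF gc cont_ev_Etop_inf]] by (simp add: o_assoc)
      then have hc': "continuous_on (closure {u::'r. \<exists>v. u * v = 1}) ((\<lambda>F. F J) \<circ> g \<circ> m)"
        by (simp add: units_dense)
      have unit: "g (x, y, t) J = 0" if ut: "\<exists>v. t * v = 1" for t
      proof -
        obtain v where tv: "t * v = 1" using ut by blast
        have "vdiff (f \<infinity> (vadd x (vscale sE t y))) (f \<infinity> x) = vscale sF t (g (x, y, t))"
          using wg mdom[of t] unfolding C1_wit_def m_def by blast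
        then have "vdiff (f (enat N) (vadd x (vscale sE t y))) (f (enat N) x) J = vscale sF t (g (x, y, t)) J"
          using f_inf[OF xU] f_inf[OF zU[of t]] by simp
        moreover have "f (enat N) (vadd x (vscale sE t y)) J = 0" "f (enat N) x J = 0"
          using f_in[OF zU[of t]] f_in[OF xU] Ebar_sub_TE TE_zero False by blast+
        ultimately have "sF t (g (x, y, t) J) = sF t 0"
          by (simp add: vdiff_def vscale_def c.sFs)
        then show ?thesis using c.unit_cancel[OF tv] by blast
      qed
      have "((\<lambda>F. F J) \<circ> g \<circ> m) 0 = 0"
        by (rule continuous_constant_on_closure[OF hc']) (auto simp: m_def unit units_dense)
      then show ?thesis using False by (simp add: m_def projN_def)
    qed
  qed
  have xyU: "vadd x y \<in> U (enat N)" by (rule c.UU_vadd[OF xU yI])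
  show ?thesis
    unfolding dC1_def g_def[symmetric]
    using main pz f_inf[OF xU] f_inf[OF xyU] by simp
qed

end

theorem proposition2p16:
  fixes sE :: "'r::{comm_ring_1,topological_ab_group_add,topological_semigroup_mult,t2_space} \<Rightarrow> 'e::{topological_ab_group_add,t2_space} \<Rightarrow> 'e"
    and sF :: "'r \<Rightarrow> 'f::{topological_ab_group_add,t2_space} \<Rightarrow> 'f"
    and E0 E1 :: "'e set" and F0 F1 :: "'f set"
    and U :: "enat \<Rightarrow> (nat set \<Rightarrow> 'e) set"
    and f :: "enat \<Rightarrow> (nat set \<Rightarrow> 'e) \<Rightarrow> (nat set \<Rightarrow> 'f)"
  assumes units_dense: "closure {u::'r. \<exists>v. u * v = 1} = UNIV"
    and E_mod: "graded_top_module sE E0 E1"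
    and F_mod: "graded_top_module sF F0 F1"
    and U_open: "\<And>N::nat. openin (Etop E0 E1 (enat N)) (U (enat N))"
    and U_sub: "\<And>n. U n = {x \<in> Ebar E0 E1 n. Emap sE geps x \<in> U 0}"
    and f_cont: "\<And>N::nat. continuous_map (subtopology (Etop E0 E1 (enat N)) (U (enat N)))
                               (Etop F0 F1 (enat N)) (f (enat N))"
    and f_nat: "\<And>(N::nat) (M::nat) \<phi>. gmorph (enat N) (enat M) \<phi> \<Longrightarrow>
                  \<forall>x\<in>U (enat N). Emap sF \<phi> (f (enat N) x) = f (enat M) (Emap sE \<phi> x)"
    and f_inf: "\<And>(N::nat) x. x \<in> U (enat N) \<Longrightarrow> f \<infinity> x = f (enat N) x"
  shows
    "((\<forall>N::nat. is_C1 sE sF (Etop E0 E1 (enat N)) (Etop F0 F1 (enat N)) (U (enat N)) (f (enat N))) \<longrightarrow>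
       (\<forall>N::nat. \<forall>x\<in>U (enat N). \<forall>p. p < N \<longrightarrow> (\<forall>y\<in>Ebar_ideal E0 E1 (enat N) p.
          f (enat N) (vadd x y) =
            vadd (f (enat N) x)
              (dC1 sE sF (Etop E0 E1 (enat N)) (Etop F0 F1 (enat N)) (U (enat N)) (f (enat N)) x y))))
     \<and>
     ((locally_kw (euclidean :: 'r topology) \<and> locally_kw (euclidean :: 'e topology) \<and>
       locally_kw (euclidean :: 'f topology) \<and>
       is_C1 sE sF (Etop E0 E1 \<infinity>) (Etop F0 F1 \<infinity>) (U \<infinity>) (f \<infinity>)) \<longrightarrow>
       (\<forall>n::enat. \<forall>x\<in>U n. \<forall>p. enat p < n \<longrightarrow> (\<forall>y\<in>Ebar_ideal E0 E1 n p.
          f n (vadd x y) =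
            vadd (f n x) (dC1 sE sF (Etop E0 E1 n) (Etop F0 F1 n) (U n) (f n) x y))))"
  proof -
  interpret s: setting sE sF E0 E1 F0 F1 U f
    by (rule setting.intro[OF assms])
  show ?thesis
  proof (intro conjI)
    show "(\<forall>N::nat. is_C1 sE sF (Etop E0 E1 (enat N)) (Etop F0 F1 (enat N)) (U (enat N)) (f (enat N))) \<longrightarrow>
       (\<forall>N::nat. \<forall>x\<in>U (enat N). \<forall>p. p < N \<longrightarrow> (\<forall>y\<in>Ebar_ideal E0 E1 (enat N) p.
          f (enat N) (vadd x y) =
            vadd (f (enat N) x)
              (dC1 sE sF (Etop E0 E1 (enat N)) (Etop F0 F1 (enat N)) (U (enat N)) (f (enat N)) x y)))"
      using s.part1 by blast
    show "((locally_kw (euclidean :: 'r topology) \<and> locally_kw (euclidean :: 'e topology) \<and>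
       locally_kw (euclidean :: 'f topology) \<and>
       is_C1 sE sF (Etop E0 E1 \<infinity>) (Etop F0 F1 \<infinity>) (U \<infinity>) (f \<infinity>)) \<longrightarrow>
       (\<forall>n::enat. \<forall>x\<in>U n. \<forall>p. enat p < n \<longrightarrow> (\<forall>y\<in>Ebar_ideal E0 E1 n p.
          f n (vadd x y) =
            vadd (f n x) (dC1 sE sF (Etop E0 E1 n) (Etop F0 F1 n) (U n) (f n) x y))))"
    proof (intro impI allI ballI)
      fix n :: enat and x p y
      assume h: "locally_kw (euclidean :: 'r topology) \<and> locally_kw (euclidean :: 'e topology) \<and>
       locally_kw (euclidean :: 'f topology) \<and>
       is_C1 sE sF (Etop E0 E1 \<infinity>) (Etop F0 F1 \<infinity>) (U \<infinity>) (f \<infinity>)"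
        and x: "x \<in> U n" and y: "y \<in> Ebar_ideal E0 E1 n p"
      have C: "is_C1 sE sF (Etop E0 E1 \<infinity>) (Etop F0 F1 \<infinity>) (U \<infinity>) (f \<infinity>)" using h by blast
      show "f n (vadd x y) = vadd (f n x) (dC1 sE sF (Etop E0 E1 n) (Etop F0 F1 n) (U n) (f n) x y)"
      proof (cases n)
        case (enat N)
        show ?thesis using s.part2_fin[OF C, of x N y p] x y unfolding enat by blast
      next
        case infinity
        show ?thesis using s.part2_inf[OF C, of x y p] x y unfolding infinity by blast
      qed
    qed
  qed
qed

end
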